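(* Let $\mathbb{V}_0$ be a finite set of nodes with an optimal TSP route $\sigma_0$, and let $Z_1,\dots,Z_k$ be additional distinct nodes not in $\mathbb{V}_0$, with $\omega$ a symmetric weight function on pairs of distinct nodes of $\mathbb{V}_0\cup\{Z_1,\dots,Z_k\}$. For $i=1,\dots,k$ let $\mathbb{V}_i=\mathbb{V}_{i-1}\cup\{Z_i\}$, let $P_i,Q_i$ be neighbours on $\sigma_{i-1}$, and let $\sigma_i$ be obtained from $\sigma_{i-1}$ by inserting $Z_i$ between $P_i$ and $Q_i$. Suppose that for every $i$ there is no unordered pair $\{A,B\}$ of distinct nodes of $\mathbb{V}_{i-1}$ (which includes the previously added nodes $Z_1,\dots,Z_{i-1}$) with $\{A,B\}\neq\{P_i,Q_i\}$ such that $\omega(A,Z_i)+\omega(B,Z_i)-\omega(A,B)\le\omega(P_i,Z_i)+\omega(Q_i,Z_i)-\omega(P_i,Q_i)$. Then $\sigma_k$ is an optimal TSP route over $\mathbb{V}_k=\mathbb{V}_0\cup\{Z_1,\dots,Z_k\}$.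
   Context: For a set of nodes with weights $\omega$, a route is a cyclic ordering (permutation) $\sigma=(\sigma_1,\dots,\sigma_n)$ of all nodes, with cost $c(\sigma)=\omega(\sigma_n,\sigma_1)+\sum_{i=1}^{n-1}\omega(\sigma_i,\sigma_{i+1})$; a route is optimal if it minimizes this cost. Two nodes are neighbours on $\sigma$ if they are consecutive in $\sigma$ or are its first and last element. *)

theory Defs
  imports Complex_Main
begin

text \<open>A route over a node set V is a list enumerating V without repetition
  (read cyclically).\<close>
definition is_route :: "'a set \<Rightarrow> 'a list \<Rightarrow> bool" where
  "is_route V xs \<longleftrightarrow> distinct xs \<and> set xs = V"

definition route_cost :: "('a \<Rightarrow> 'a \<Rightarrow> real) \<Rightarrow> 'a list \<Rightarrow> real" where
  "route_cost w xs = (if xs = [] then 0 else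
     w (last xs) (hd xs) + (\<Sum>i<length xs - 1. w (xs ! i) (xs ! Suc i)))"

definition optimal_route :: "('a \<Rightarrow> 'a \<Rightarrow> real) \<Rightarrow> 'a set \<Rightarrow> 'a list \<Rightarrow> bool" where
  "optimal_route w V xs \<longleftrightarrow> is_route V xs \<and>
     (\<forall>ys. is_route V ys \<longrightarrow> route_cost w xs \<le> route_cost w ys)"

definition neighbours :: "'a list \<Rightarrow> 'a \<Rightarrow> 'a \<Rightarrow> bool" where
  "neighbours xs A B \<longleftrightarrow>
     (\<exists>i. Suc i < length xs \<and> {xs ! i, xs ! Suc i} = {A, B}) \<or>
     (xs \<noteq> [] \<and> {hd xs, last xs} = {A, B})"

definition inserted_between :: "'a list \<Rightarrow> 'a \<Rightarrow> 'a \<Rightarrow> 'a \<Rightarrow> 'a list \<Rightarrow> bool" where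
  "inserted_between xs P Q z ys \<longleftrightarrow>
     (\<exists>us vs. (xs = us @ P # Q # vs \<and> ys = us @ P # z # Q # vs) \<or>
              (xs = us @ Q # P # vs \<and> ys = us @ Q # z # P # vs)) \<or>
     (xs \<noteq> [] \<and> {hd xs, last xs} = {P, Q} \<and> ys = xs @ [z])"

end

theory Submission
  imports Defs
begin

fun pc :: "('a \<Rightarrow> 'a \<Rightarrow> real) \<Rightarrow> 'a list \<Rightarrow> real" where
  "pc w [] = 0"
| "pc w [x] = 0"
| "pc w (x # y # r) = w x y + pc w (y # r)"

lemma pc_sum: "(\<Sum>i<length xs - 1. w (xs ! i) (xs ! Suc i)) = pc w xs"
proof (induction w xs rule: pc.induct)
  case (3 w x y r)
  have "(\<Sum>i<length (x # y # r) - 1. w ((x # y # r) ! i) ((x # y # r) ! Suc i))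
      = (\<Sum>i<Suc (length (y # r) - 1). w ((x # y # r) ! i) ((x # y # r) ! Suc i))" by simp
  also have "\<dots> = w x y + (\<Sum>i<length (y # r) - 1. w ((y # r) ! i) ((y # r) ! Suc i))"
    by (subst sum.lessThan_Suc_shift) simp
  finally show ?case using 3 by simp
qed auto

lemma rc_pc: "xs \<noteq> [] \<Longrightarrow> route_cost w xs = w (last xs) (hd xs) + pc w xs"
  using pc_sum[where xs=xs and w=w] by (simp add: route_cost_def)

lemma pc_append: "xs \<noteq> [] \<Longrightarrow> ys \<noteq> [] \<Longrightarrow> pc w (xs @ ys) = pc w xs + w (last xs) (hd ys) + pc w ys"
proof (induction w xs rule: pc.induct)
  case (2 w x)
  then show ?case by (cases ys) auto
qed auto

lemma rc_rot: "route_cost w (xs @ ys) = route_cost w (ys @ xs)"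
proof (cases "xs = [] \<or> ys = []")
  case True then show ?thesis by auto
next
  case False
  then show ?thesis by (simp add: rc_pc pc_append)
qed

lemma rc_snoc: "r \<noteq> [] \<Longrightarrow> route_cost w (r @ [z]) = route_cost w r + w (last r) z + w z (hd r) - w (last r) (hd r)"
  by (simp add: rc_pc pc_append)

lemma hd_last_eq: "distinct r \<Longrightarrow> r \<noteq> [] \<Longrightarrow> hd r = last r \<Longrightarrow> r = [hd r]"
  by (cases r) (auto split: if_splits)

lemma step:
  assumes opt: "optimal_route w U s"
    and zn: "z \<notin> U"
    and sym: "\<forall>x\<in>insert z U. \<forall>y\<in>insert z U. w x y = w y x"
    and ib: "inserted_between s p q z s'"
    and un: "\<not> (\<exists>A\<in>U. \<exists>B\<in>U. A \<noteq> B \<and> {A, B} \<noteq> {p, q} \<and>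
                   w A z + w B z - w A B \<le> w p z + w q z - w p q)"
  shows "optimal_route w (insert z U) s'"
proof -
  have rs: "distinct s" "set s = U" using opt by (auto simp: optimal_route_def is_route_def)
  have sopt: "\<And>ys. is_route U ys \<Longrightarrow> route_cost w s \<le> route_cost w ys"
    using opt by (auto simp: optimal_route_def)
  obtain \<rho> where \<rho>: "\<rho> \<noteq> []" "set \<rho> = U" "distinct \<rho>" "route_cost w \<rho> = route_cost w s"
    "route_cost w s' = route_cost w (\<rho> @ [z])" "set s' = insert z U" "distinct s'"
    "{last \<rho>, hd \<rho>} = {p, q}"
  proof -
    consider (a) us vs where "s = us @ p # q # vs" "s' = us @ p # z # q # vs"
      | (b) us vs where "s = us @ q # p # vs" "s' = us @ q # z # p # vs"
      | (c) "s \<noteq> []" "{hd s, last s} = {p, q}" "s' = s @ [z]"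
      using ib unfolding inserted_between_def by blast
    then show ?thesis
    proof cases
      case a
      have e1: "route_cost w s = route_cost w ((q # vs) @ (us @ [p]))"
        using a rc_rot[of w "us @ [p]" "q # vs"] by simp
      have e2: "route_cost w s' = route_cost w ((q # vs @ us @ [p]) @ [z])"
        using a rc_rot[of w "us @ [p, z]" "q # vs"] by simp
      show ?thesis
        by (rule that[of "q # vs @ us @ [p]"]) (use a rs zn e1 e2 in auto)
    next
      case b
      have e1: "route_cost w s = route_cost w ((p # vs) @ (us @ [q]))"
        using b rc_rot[of w "us @ [q]" "p # vs"] by simp
      have e2: "route_cost w s' = route_cost w ((p # vs @ us @ [q]) @ [z])"
        using b rc_rot[of w "us @ [q, z]" "p # vs"] by simp
      show ?thesis
        by (rule that[of "p # vs @ us @ [q]"]) (use b rs zn e1 e2 in auto)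
    next
      case c
      show ?thesis
        by (rule that[of s]) (use c rs zn in auto)
    qed
  qed
  have pq: "p \<in> U" "q \<in> U" using \<rho>(8) \<rho>(1) \<rho>(2)
    by (metis insertI1 insert_commute empty_iff insert_iff hd_in_set last_in_set)+
  define ins where "ins a b = w a z + w b z - w a b" for a b
  have insc: "ins a b = w a z + w z b - w a b" if "a \<in> U" "b \<in> U" for a b
  proof -
    have "w z b = w b z" using sym that by blast
    then show ?thesis by (simp add: ins_def)
  qed
  have inssym: "ins a b = ins b a" if "a \<in> U" "b \<in> U" for a b
  proof -
    have "w a b = w b a" using sym that by blast
    then show ?thesis by (simp add: ins_def)
  qed
  have cs': "route_cost w s' = route_cost w s + ins p q"
  proof -
    have lr: "last \<rho> \<in> U" "hd \<rho> \<in> U" using \<rho>(1,2) by auto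
    have "route_cost w s' = route_cost w s + ins (last \<rho>) (hd \<rho>)"
      using \<rho> rc_snoc[of \<rho> w z] insc[OF lr] by simp
    moreover have "ins (last \<rho>) (hd \<rho>) = ins p q"
      using \<rho>(8) inssym[OF pq] by (auto simp: doubleton_eq_iff)
    ultimately show ?thesis by simp
  qed
  show ?thesis
    unfolding optimal_route_def is_route_def
  proof (intro conjI allI impI)
    show "distinct s'" "set s' = insert z U" using \<rho> by auto
    fix t assume t: "distinct t \<and> set t = insert z U"
    then obtain us vs where tu: "t = us @ z # vs" by (metis insertI1 split_list)
    define r where "r = vs @ us"
    have ct: "route_cost w t = route_cost w (r @ [z])"
      using rc_rot[of w us "z # vs"] rc_rot[of w "[z]" "vs @ us"] tu by (simp add: r_def)
    have rset: "set r = U" "distinct r" using t tu zn unfolding r_def by auto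
    have rne: "r \<noteq> []" using rset \<rho>(1) \<rho>(2) by auto
    have la: "last r \<in> U" "hd r \<in> U" using rset rne by auto
    have cr: "route_cost w s \<le> route_cost w r" using sopt rset by (simp add: is_route_def)
    have ctr: "route_cost w t = route_cost w r + ins (last r) (hd r)"
      using ct rc_snoc[of r w z] insc[OF la] rne by simp
    have "ins p q \<le> ins (last r) (hd r)"
    proof (cases "last r = hd r")
      case True
      then have "r = [hd r]" using hd_last_eq rset rne by metis
      then have "U = {hd r}" using rset by (metis list.set(1) list.set(2))
      then show ?thesis using pq True by simp
    next
      case False
      show ?thesis
      proof (cases "{last r, hd r} = {p, q}")
        case True then show ?thesis using inssym[OF pq] by (auto simp: doubleton_eq_iff)
      next
        case F2: False
        have "\<not> (w (last r) z + w (hd r) z - w (last r) (hd r) \<le> w p z + w q z - w p q)"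
          using un la False F2 by blast
        then show ?thesis unfolding ins_def by simp
      qed
    qed
    then show "route_cost w s' \<le> route_cost w t" using cs' ctr cr by simp
  qed
qed

theorem corollary1:
  fixes V0 :: "'a set" and k :: nat and Z :: "nat \<Rightarrow> 'a"
    and w :: "'a \<Rightarrow> 'a \<Rightarrow> real" and \<sigma> :: "nat \<Rightarrow> 'a list"
    and P Q :: "nat \<Rightarrow> 'a" and V :: "nat \<Rightarrow> 'a set"
  assumes fin: "finite V0"
    and opt0: "optimal_route w V0 (\<sigma> 0)"
    and Z_new: "\<forall>i\<in>{1..k}. Z i \<notin> V0"
    and Z_dist: "inj_on Z {1..k}"
    and w_sym: "\<forall>x\<in>V0 \<union> Z ` {1..k}. \<forall>y\<in>V0 \<union> Z ` {1..k}. w x y = w y x"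
    and V_def: "\<forall>i\<le>k. V i = V0 \<union> Z ` {1..i}"
    and nb: "\<forall>i\<in>{1..k}. neighbours (\<sigma> (i - 1)) (P i) (Q i)"
    and ins: "\<forall>i\<in>{1..k}. inserted_between (\<sigma> (i - 1)) (P i) (Q i) (Z i) (\<sigma> i)"
    and unique: "\<forall>i\<in>{1..k}. \<not> (\<exists>A\<in>V (i - 1). \<exists>B\<in>V (i - 1).
                   A \<noteq> B \<and> {A, B} \<noteq> {P i, Q i} \<and>
                   w A (Z i) + w B (Z i) - w A B \<le> w (P i) (Z i) + w (Q i) (Z i) - w (P i) (Q i))"
  shows "optimal_route w (V k) (\<sigma> k)"
proof -
  have "i \<le> k \<Longrightarrow> optimal_route w (V i) (\<sigma> i)" for i
  proof (induction i)
    case 0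
    then show ?case using opt0 V_def by simp
  next
    case (Suc i)
    have i1: "Suc i \<in> {1..k}" using Suc by simp
    have IH: "optimal_route w (V i) (\<sigma> i)" using Suc.IH Suc.prems by simp
    have Vi: "V i = V0 \<union> Z ` {1..i}" using V_def Suc.prems by simp
    have Vsi: "V (Suc i) = V0 \<union> Z ` {1..Suc i}" using V_def Suc.prems by blast
    have "{1..Suc i} = insert (Suc i) {1..i}" by auto
    then have Vs: "V (Suc i) = insert (Z (Suc i)) (V i)" using Vsi Vi by auto
    have zn: "Z (Suc i) \<notin> V i"
    proof
      assume "Z (Suc i) \<in> V i"
      then consider "Z (Suc i) \<in> V0" | j where "j \<in> {1..i}" "Z (Suc i) = Z j" using Vi by auto
      then show False
      proof cases
        case 1 then show ?thesis using Z_new i1 by blast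
      next
        case 2
        have j1: "j \<in> {1..k}" using 2(1) Suc.prems by simp
        have "Suc i = j" using inj_onD[OF Z_dist 2(2) i1 j1] .
        then show ?thesis using 2 by simp
      qed
    qed
    have sym: "\<forall>x\<in>insert (Z (Suc i)) (V i). \<forall>y\<in>insert (Z (Suc i)) (V i). w x y = w y x"
    proof -
      have s1: "Z ` {1..i} \<subseteq> Z ` {1..k}" using Suc.prems by (intro image_mono) auto
      have s2: "Z (Suc i) \<in> Z ` {1..k}" using i1 by (rule imageI)
      have sub: "insert (Z (Suc i)) (V i) \<subseteq> V0 \<union> Z ` {1..k}" unfolding Vi using s1 s2 by blast
      show ?thesis
      proof (intro ballI)
        fix x y assume "x \<in> insert (Z (Suc i)) (V i)" "y \<in> insert (Z (Suc i)) (V i)"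
        then have "x \<in> V0 \<union> Z ` {1..k}" "y \<in> V0 \<union> Z ` {1..k}" using sub by (auto simp del: insert_iff Un_iff)
        then show "w x y = w y x" using w_sym by simp
      qed
    qed
    show ?case unfolding Vs
      by (rule step[OF IH zn sym]) (use ins[rule_format, OF i1] unique[rule_format, OF i1] in simp_all)
  qed
  then show ?thesis by simp
qed

end
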